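(* Let $a\ge b\ge2$ and $k$ be integers with $a+b+1\le k\le a+2b-1$. Then for every $(i,j)\in\overline{Q}_3$ we have $w_1,w_4,w_6\in\mathcal{R}^k_{(a,b),(i,j)}$.
   Context: $\widehat{\mathfrak{su}}(3)_k$ fusion. Let $P_+^k=\{(\lambda_1,\lambda_2)\in\mathbb{Z}_{\ge0}^2:\lambda_1+\lambda_2\le k\}$. For $\lambda,\mu,\nu\in P_+^k$ set - $\mathcal{A}=\tfrac13[2(\lambda_1+\mu_1+\nu_2)+\lambda_2+\mu_2+\nu_1]$, - $\mathcal{B}=\tfrac13[\lambda_1+\mu_1+\nu_2+2(\lambda_2+\mu_2+\nu_1)]$, - $k_0^{\max}=\min(\mathcal{A},\mathcal{B})$, - $k_0^{\min}=\max(\lambda_1+\lambda_2,\mu_1+\mu_2,\nu_1+\nu_2,\mathcal{A}-\lambda_1,\mathcal{A}-\mu_1,\mathcal{A}-\nu_2,\mathcal{B}-\lambda_2,\mathcal{B}-\mu_2,\mathcal{B}-\nu_1)$. The fusion multiplicity is $N^{(k)\nu}_{\lambda,\mu}=\min(k_0^{\max},k)-k_0^{\min}+1$ if $\mathcal{A},\mathcal{B}$ are nonnegative integers, $k_0^{\max}\ge k_0^{\min}$ and $k\ge k_0^{\min}$; otherwise it is $0$. The set $\mathcal{R}^k_{\lambda,\mu}$ is $\{\nu\in P_+^k:N^{(k)\nu}_{\lambda,\mu}\ne0\}$. The candidate weights are $w_1=(a-1,b+2)$, $w_2=(a+2,b-1)$, $w_3=(a+1,b-2)$, $w_4=(a-2,b+1)$,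 $w_5=(a+1,b+1)$, $w_6=(a-1,b-1)$. The set $\overline{Q}_3$ is defined by $\overline{Q}_3=\{(p+k-a-b,p-2k+2a+2b):p\in\mathbb{Z},\ 2k-2a-2b\le p\le k-a-1\}$. *)

theory Defs
  imports Main "HOL.Rat"
begin

type_synonym wt = "int \<times> int"

definition Pplus :: "int \<Rightarrow> wt set" where
  "Pplus k = {(l1, l2). 0 \<le> l1 \<and> 0 \<le> l2 \<and> l1 + l2 \<le> k}"

definition fusA :: "wt \<Rightarrow> wt \<Rightarrow> wt \<Rightarrow> rat" where
  "fusA lam mu nu = (2 * of_int (fst lam + fst mu + snd nu) + of_int (snd lam + snd mu + fst nu)) / 3"

definition fusB :: "wt \<Rightarrow> wt \<Rightarrow> wt \<Rightarrow> rat" where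
  "fusB lam mu nu = (of_int (fst lam + fst mu + snd nu) + 2 * of_int (snd lam + snd mu + fst nu)) / 3"

definition k0max :: "wt \<Rightarrow> wt \<Rightarrow> wt \<Rightarrow> rat" where
  "k0max lam mu nu = min (fusA lam mu nu) (fusB lam mu nu)"

definition k0min :: "wt \<Rightarrow> wt \<Rightarrow> wt \<Rightarrow> rat" where
  "k0min lam mu nu = (let A = fusA lam mu nu; B = fusB lam mu nu in
     Max {of_int (fst lam + snd lam), of_int (fst mu + snd mu), of_int (fst nu + snd nu),
          A - of_int (fst lam), A - of_int (fst mu), A - of_int (snd nu),
          B - of_int (snd lam), B - of_int (snd mu), B - of_int (fst nu)})"

definition fusN :: "int \<Rightarrow> wt \<Rightarrow> wt \<Rightarrow> wt \<Rightarrow> rat" where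
  "fusN k lam mu nu = (let A = fusA lam mu nu; B = fusB lam mu nu;
      kmax = k0max lam mu nu; kmin = k0min lam mu nu in
    if A \<in> \<int> \<and> B \<in> \<int> \<and> 0 \<le> A \<and> 0 \<le> B \<and> kmin \<le> kmax \<and> kmin \<le> of_int k
    then min kmax (of_int k) - kmin + 1 else 0)"

definition fusR :: "int \<Rightarrow> wt \<Rightarrow> wt \<Rightarrow> wt set" where
  "fusR k lam mu = {nu \<in> Pplus k. fusN k lam mu nu \<noteq> 0}"

definition Q3bar :: "int \<Rightarrow> int \<Rightarrow> int \<Rightarrow> wt set" where
  "Q3bar a b k = {(p + k - a - b, p - 2*k + 2*a + 2*b) | p. 2*k - 2*a - 2*b \<le> p \<and> p \<le> k - a - 1}"

end

theory Submission
  imports Defs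
begin

lemma fusN_pos:
  assumes A: "fusA l m n = of_int A" and B: "fusB l m n = of_int B" and "0 \<le> A" "0 \<le> B"
    and "k0min l m n \<le> of_int (min A B)" "k0min l m n \<le> of_int k"
  shows "fusN k l m n \<noteq> 0"
proof -
  have mx: "k0max l m n = of_int (min A B)" unfolding k0max_def A B by simp
  have "min (k0max l m n) (of_int k) - k0min l m n + 1 > 0"
    using assms(5,6) unfolding mx by linarith
  then show ?thesis unfolding fusN_def Let_def using assms mx by auto
qed

lemma k0min_le:
  assumes "fusA l m n = of_int A" and "fusB l m n = of_int B"
    and "\<forall>x \<in> {fst l + snd l, fst m + snd m, fst n + snd n, A - fst l, A - fst m, A - snd n,
          B - snd l, B - snd m, B - fst n}. x \<le> c"
  shows "k0min l m n \<le> of_int c"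
  using assms unfolding k0min_def Let_def by (simp add: Max_le_iff)

lemma case1:
  fixes a b k p :: int
  assumes "a \<ge> b" and "b \<ge> 2" and "a + b + 1 \<le> k" and "k \<le> a + 2*b - 1"
    and "2*k - 2*a - 2*b \<le> p" "p \<le> k - a - 1"
    and "n = (a - 1, b + 2) \<or> n = (a - 2, b + 1) \<or> n = (a - 1, b - 1)"
  shows "n \<in> fusR k (a, b) (p + k - a - b, p - 2*k + 2*a + 2*b)"
  using assms(7)
proof (elim disjE)
  assume n: "n = (a - 1, b + 2)"
  have A: "fusA (a, b) (p + k - a - b, p - 2*k + 2*a + 2*b) n = of_int (p+a+b+1)"
    unfolding fusA_def n by (simp add: field_simps)
  have B: "fusB (a, b) (p + k - a - b, p - 2*k + 2*a + 2*b) n = of_int (p - k + 2*a + 2*b)"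
    unfolding fusB_def n by (simp add: field_simps)
  have P: "n \<in> Pplus k" unfolding Pplus_def n using assms(1-6) by simp
  have m1: "k0min (a, b) (p + k - a - b, p - 2*k + 2*a + 2*b) n \<le> of_int (min (p+a+b+1) (p - k + 2*a + 2*b))"
    using assms(1-6) by (intro k0min_le[OF A B]) (simp add: n)
  have m2: "k0min (a, b) (p + k - a - b, p - 2*k + 2*a + 2*b) n \<le> of_int k"
    using assms(1-6) by (intro k0min_le[OF A B]) (simp add: n)
  have "fusN k (a, b) (p + k - a - b, p - 2*k + 2*a + 2*b) n \<noteq> 0"
    using assms(1-6) by (intro fusN_pos[OF A B _ _ m1 m2]) simp_all
  then show ?thesis using P unfolding fusR_def by simp
next
  assume n: "n = (a - 2, b + 1)"
  have A: "fusA (a, b) (p + k - a - b, p - 2*k + 2*a + 2*b) n = of_int (p+a+b)"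
    unfolding fusA_def n by (simp add: field_simps)
  have B: "fusB (a, b) (p + k - a - b, p - 2*k + 2*a + 2*b) n = of_int (p - k + 2*a + 2*b - 1)"
    unfolding fusB_def n by (simp add: field_simps)
  have P: "n \<in> Pplus k" unfolding Pplus_def n using assms(1-6) by simp
  have m1: "k0min (a, b) (p + k - a - b, p - 2*k + 2*a + 2*b) n \<le> of_int (min (p+a+b) (p - k + 2*a + 2*b - 1))"
    using assms(1-6) by (intro k0min_le[OF A B]) (simp add: n)
  have m2: "k0min (a, b) (p + k - a - b, p - 2*k + 2*a + 2*b) n \<le> of_int k"
    using assms(1-6) by (intro k0min_le[OF A B]) (simp add: n)
  have "fusN k (a, b) (p + k - a - b, p - 2*k + 2*a + 2*b) n \<noteq> 0"
    using assms(1-6) by (intro fusN_pos[OF A B _ _ m1 m2]) simp_all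
  then show ?thesis using P unfolding fusR_def by simp
next
  assume n: "n = (a - 1, b - 1)"
  have A: "fusA (a, b) (p + k - a - b, p - 2*k + 2*a + 2*b) n = of_int (p+a+b-1)"
    unfolding fusA_def n by (simp add: field_simps)
  have B: "fusB (a, b) (p + k - a - b, p - 2*k + 2*a + 2*b) n = of_int (p - k + 2*a + 2*b - 1)"
    unfolding fusB_def n by (simp add: field_simps)
  have P: "n \<in> Pplus k" unfolding Pplus_def n using assms(1-6) by simp
  have m1: "k0min (a, b) (p + k - a - b, p - 2*k + 2*a + 2*b) n \<le> of_int (min (p+a+b-1) (p - k + 2*a + 2*b - 1))"
    using assms(1-6) by (intro k0min_le[OF A B]) (simp add: n)
  have m2: "k0min (a, b) (p + k - a - b, p - 2*k + 2*a + 2*b) n \<le> of_int k"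
    using assms(1-6) by (intro k0min_le[OF A B]) (simp add: n)
  have "fusN k (a, b) (p + k - a - b, p - 2*k + 2*a + 2*b) n \<noteq> 0"
    using assms(1-6) by (intro fusN_pos[OF A B _ _ m1 m2]) simp_all
  then show ?thesis using P unfolding fusR_def by simp
qed

theorem mainTheorem12:
  fixes a b k :: int
  assumes "a \<ge> b" and "b \<ge> 2" and "a + b + 1 \<le> k" and "k \<le> a + 2*b - 1"
  shows "\<forall>(i, j) \<in> Q3bar a b k.
           (a - 1, b + 2) \<in> fusR k (a, b) (i, j) \<and>
           (a - 2, b + 1) \<in> fusR k (a, b) (i, j) \<and>
           (a - 1, b - 1) \<in> fusR k (a, b) (i, j)"
proof (intro ballI)
  fix x assume "x \<in> Q3bar a b k"
  then obtain p where x: "x = (p + k - a - b, p - 2*k + 2*a + 2*b)"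
    and p: "2*k - 2*a - 2*b \<le> p" "p \<le> k - a - 1" unfolding Q3bar_def by blast
  show "case x of (i, j) \<Rightarrow>
           (a - 1, b + 2) \<in> fusR k (a, b) (i, j) \<and>
           (a - 2, b + 1) \<in> fusR k (a, b) (i, j) \<and>
           (a - 1, b - 1) \<in> fusR k (a, b) (i, j)"
    unfolding x prod.case
    by (intro conjI; rule case1[OF assms p]; simp)
qed

end
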